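(* Let $X$ be a Banach space and let $C$ be a convex weak*-compact subset of $X^{**}$. Then there is a filtering family $(C_\alpha)_{\alpha\in\Gamma}$ of convex, bounded, closed subsets of $X$ such that $C=\bigcap_{\alpha\in\Gamma}\overline{C_\alpha}^{w^*}$.
   Context: Regard $X$ as a subspace of $X^{**}$ via the canonical embedding; $\overline{A}^{w^*}$ denotes the weak*-closure in $X^{**}$ of $A\subset X$. A partially ordered set $\Gamma$ is filtering if for any $i,j\in\Gamma$ there is $k\in\Gamma$ with $i\le k$ and $j\le k$. A family of sets $(C_\alpha)_{\alpha\in\Gamma}$ indexed by a filtering partially ordered set $\Gamma$ is called filtering if $\alpha\le\beta$ implies $C_\beta\subset C_\alpha$. *)

theory Defs
  imports "HOL-Analysis.Analysis"
begin

(* The dual of a real Banach space 'a is ('a =>L real); the bidual is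
  (('a =>L real) =>L real). *)

definition canon_embed :: "'a::banach \<Rightarrow> (('a \<Rightarrow>\<^sub>L real) \<Rightarrow>\<^sub>L real)" where
  "canon_embed x = Blinfun (\<lambda>f. blinfun_apply f x)"

definition weak_star :: "(('a::real_normed_vector \<Rightarrow>\<^sub>L real) \<Rightarrow>\<^sub>L real) topology" where
  "weak_star = topology_generated_by
     {{\<phi>. blinfun_apply \<phi> f \<in> U} | f U. open (U :: real set)}"

definition filtering_poset :: "'i set \<Rightarrow> ('i \<times> 'i) set \<Rightarrow> bool" where
  "filtering_poset \<Gamma> r \<longleftrightarrow> partial_order_on \<Gamma> r \<and>
     (\<forall>i\<in>\<Gamma>. \<forall>j\<in>\<Gamma>. \<exists>k\<in>\<Gamma>. (i, k) \<in> r \<and> (j, k) \<in> r)"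

definition filtering_family :: "'i set \<Rightarrow> ('i \<times> 'i) set \<Rightarrow> ('i \<Rightarrow> 'b set) \<Rightarrow> bool" where
  "filtering_family \<Gamma> r Cs \<longleftrightarrow> filtering_poset \<Gamma> r \<and>
     (\<forall>\<alpha>\<in>\<Gamma>. \<forall>\<beta>\<in>\<Gamma>. (\<alpha>, \<beta>) \<in> r \<longrightarrow> Cs \<beta> \<subseteq> Cs \<alpha>)"

end

theory Submission
  imports Defs
begin

lemma canon_apply: "blinfun_apply (canon_embed x) f = blinfun_apply f x"
proof -
  have "bounded_linear (\<lambda>f::'a \<Rightarrow>\<^sub>L real. blinfun_apply f x)"
    by (rule bounded_bilinear.bounded_linear_left[OF bounded_bilinear_blinfun_apply])
  then show ?thesis unfolding canon_embed_def by (simp add: bounded_linear_Blinfun_apply)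
qed

lemma ws_topspace: "topspace weak_star = UNIV"
  unfolding weak_star_def topology_generated_by_topspace by auto

lemma ws_basic_open: "open U \<Longrightarrow> openin weak_star {\<phi>. blinfun_apply \<phi> f \<in> U}"
  unfolding weak_star_def by (rule topology_generated_by_Basis) auto

lemma ws_open_finite:
  assumes "finite G"
  shows "openin weak_star {\<psi>. \<forall>g\<in>G. \<bar>blinfun_apply \<psi> g - c g\<bar> < \<delta>}"
  using assms
proof (induction G)
  case empty
  then show ?case by simp (metis ws_topspace openin_topspace)
next
  case (insert g G)
  have e: "{\<psi>. \<forall>h\<in>insert g G. \<bar>blinfun_apply \<psi> h - c h\<bar> < \<delta>}
     = {\<psi>. blinfun_apply \<psi> g \<in> ball (c g) \<delta>} \<inter> {\<psi>. \<forall>h\<in>G. \<bar>blinfun_apply \<psi> h - c h\<bar> < \<delta>}"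
    by (auto simp: dist_real_def abs_minus_commute)
  show ?case unfolding e by (intro openin_Int ws_basic_open insert.IH) auto
qed

lemma ws_nbhd:
  assumes "openin weak_star U" "\<phi> \<in> U"
  shows "\<exists>G \<delta>. finite G \<and> \<delta> > 0 \<and> {\<psi>. \<forall>g\<in>G. \<bar>blinfun_apply \<psi> g - blinfun_apply \<phi> g\<bar> < \<delta>} \<subseteq> U"
proof -
  have "generate_topology_on {{\<phi>. blinfun_apply \<phi> f \<in> U} | f U. open (U :: real set)} U"
    using assms(1) unfolding weak_star_def by (rule openin_topology_generated_by)
  then show ?thesis using assms(2)
  proof (induction arbitrary: \<phi>)
    case Empty
    then show ?case by simp
  next
    case (Int a b)
    then obtain G1 d1 G2 d2 where 1: "finite G1" "d1 > 0" "{\<psi>. \<forall>g\<in>G1. \<bar>blinfun_apply \<psi> g - blinfun_apply \<phi> g\<bar> < d1} \<subseteq> a"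
      and 2: "finite G2" "d2 > 0" "{\<psi>. \<forall>g\<in>G2. \<bar>blinfun_apply \<psi> g - blinfun_apply \<phi> g\<bar> < d2} \<subseteq> b"
      using Int.IH(1)[of \<phi>] Int.IH(2)[of \<phi>] Int.prems by blast
    have "{\<psi>. \<forall>g\<in>G1 \<union> G2. \<bar>blinfun_apply \<psi> g - blinfun_apply \<phi> g\<bar> < min d1 d2} \<subseteq> a \<inter> b"
    proof
      fix \<psi> assume "\<psi> \<in> {\<psi>. \<forall>g\<in>G1 \<union> G2. \<bar>blinfun_apply \<psi> g - blinfun_apply \<phi> g\<bar> < min d1 d2}"
      then have "\<psi> \<in> {\<psi>. \<forall>g\<in>G1. \<bar>blinfun_apply \<psi> g - blinfun_apply \<phi> g\<bar> < d1}"
        "\<psi> \<in> {\<psi>. \<forall>g\<in>G2. \<bar>blinfun_apply \<psi> g - blinfun_apply \<phi> g\<bar> < d2}" by auto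
      then show "\<psi> \<in> a \<inter> b" using 1(3) 2(3) by blast
    qed
    then show ?case using 1 2 by (intro exI[of _ "G1 \<union> G2"] exI[of _ "min d1 d2"]) simp
  next
    case (UN K)
    then obtain k where "k \<in> K" "\<phi> \<in> k" by blast
    with UN.IH[of k \<phi>] show ?case by blast
  next
    case (Basis s)
    then obtain f V where s: "s = {\<phi>. blinfun_apply \<phi> f \<in> V}" "open V" by blast
    with Basis have "blinfun_apply \<phi> f \<in> V" by auto
    then obtain e where e: "e > 0" "ball (blinfun_apply \<phi> f) e \<subseteq> V"
      using s(2) open_contains_ball by blast
    have "{\<psi>. \<forall>g\<in>{f}. \<bar>blinfun_apply \<psi> g - blinfun_apply \<phi> g\<bar> < e} \<subseteq> s"
      using e s by (auto simp: dist_real_def abs_minus_commute)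
    then show ?case using e by (intro exI[of _ "{f}"] exI[of _ e]) simp
  qed
qed


lemma helly:
  fixes \<phi> :: "('a::real_normed_vector \<Rightarrow>\<^sub>L real) \<Rightarrow>\<^sub>L real"
  assumes nphi: "norm \<phi> \<le> R" and finG: "finite G" and eta: "\<eta> > 0"
  shows "\<exists>x::'a. norm x \<le> R \<and> (\<forall>g\<in>G. \<bar>blinfun_apply g x - blinfun_apply \<phi> g\<bar> < \<eta>)"
proof (rule ccontr)
  assume H: "\<not> ?thesis"
  have H': "\<exists>g\<in>G. \<eta> \<le> \<bar>blinfun_apply g x - blinfun_apply \<phi> g\<bar>" if "norm x \<le> R" for x
    using H that by (auto simp: not_less)
  define Q where "Q x = (\<Sum>g\<in>G. (blinfun_apply g x - blinfun_apply \<phi> g)\<^sup>2)" for x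
  define B where "B = {x::'a. norm x \<le> R}"
  have R0: "0 \<le> R" using nphi norm_ge_zero order_trans by blast
  have B0: "0 \<in> B" using R0 by (simp add: B_def)
  define d where "d = Inf (Q ` B)"
  have Qnn: "0 \<le> Q x" for x unfolding Q_def by (intro sum_nonneg) auto
  have bdd: "bdd_below (Q ` B)" by (rule bdd_belowI[of _ 0]) (use Qnn in auto)
  have dle: "d \<le> Q x" if "x \<in> B" for x
    unfolding d_def using bdd that by (intro cInf_lower) auto
  define L where "L = (\<Sum>g\<in>G. (norm g)\<^sup>2)"
  have L0: "0 \<le> L" unfolding L_def by (intro sum_nonneg) auto
  define D where "D = 4*R\<^sup>2*L + 1"
  have D0: "D > 0" unfolding D_def using L0 by (simp add: add_nonneg_pos)
  define t where "t = min 1 (\<eta>\<^sup>2/(4*D))"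
  have t0: "t > 0" unfolding t_def using eta D0 by simp
  have t1: "t \<le> 1" unfolding t_def by simp
  have tD: "t*D \<le> \<eta>\<^sup>2/4"
  proof -
    have "t \<le> \<eta>\<^sup>2/(4*D)" unfolding t_def by simp
    then have "t*D \<le> \<eta>\<^sup>2/(4*D) * D" using D0 by (intro mult_right_mono) auto
    also have "\<dots> = \<eta>\<^sup>2/4" using D0 by simp
    finally show ?thesis .
  qed
  define \<delta> where "\<delta> = t*\<eta>\<^sup>2/4"
  have d0: "\<delta> > 0" unfolding \<delta>_def using t0 eta by simp
  have "\<exists>y\<in>Q ` B. y < d + \<delta>"
    unfolding d_def using bdd B0 d0 by (subst cInf_less_iff[symmetric]) auto
  then obtain y where yB: "y \<in> B" and Qy: "Q y < d + \<delta>" by blast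
  have Qy2: "\<eta>\<^sup>2 \<le> Q y"
  proof -
    obtain g where g: "g \<in> G" "\<eta> \<le> \<bar>blinfun_apply g y - blinfun_apply \<phi> g\<bar>"
      using H' yB B_def by blast
    have "\<eta>\<^sup>2 \<le> \<bar>blinfun_apply g y - blinfun_apply \<phi> g\<bar>\<^sup>2"
      using g eta by (intro power_mono) auto
    also have "\<dots> = (blinfun_apply g y - blinfun_apply \<phi> g)\<^sup>2" by simp
    also have "\<dots> \<le> Q y" unfolding Q_def using g finG
      by (intro member_le_sum) auto
    finally show ?thesis .
  qed
  define a where "a g = blinfun_apply \<phi> g - blinfun_apply g y" for g
  define h where "h = (\<Sum>g\<in>G. a g *\<^sub>R g)"
  have hx: "blinfun_apply h x = (\<Sum>g\<in>G. a g * blinfun_apply g x)" for x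
    unfolding h_def by (simp add: blinfun.sum_left blinfun.scaleR_left)
  have phih: "blinfun_apply \<phi> h = (\<Sum>g\<in>G. a g * blinfun_apply \<phi> g)"
    unfolding h_def by (simp add: blinfun.sum_right blinfun.scaleR_right)
  have key: "blinfun_apply \<phi> h - blinfun_apply h y = Q y"
    unfolding phih hx Q_def sum_subtractf[symmetric]
    by (rule sum.cong) (auto simp: a_def power2_eq_square algebra_simps)
  have cl1: "blinfun_apply h x - blinfun_apply h y \<le> \<eta>\<^sup>2/4" if xB: "x \<in> B" for x
  proof -
    define z where "z = y + t *\<^sub>R (x - y)"
    have "z = (1 - t) *\<^sub>R y + t *\<^sub>R x" unfolding z_def by (simp add: algebra_simps)
    then have "norm z \<le> norm ((1 - t) *\<^sub>R y) + norm (t *\<^sub>R x)" by (metis norm_triangle_ineq)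
    also have "\<dots> = (1 - t) * norm y + t * norm x" using t0 t1 by simp
    also have "\<dots> \<le> (1 - t) * R + t * R"
      using xB yB t0 t1 unfolding B_def by (intro add_mono mult_left_mono) auto
    finally have zB: "z \<in> B" unfolding B_def by (simp add: algebra_simps)
    define S where "S = (\<Sum>g\<in>G. (blinfun_apply g (x - y))\<^sup>2)"
    have S: "S \<le> 4*R\<^sup>2*L"
    proof -
      have "S \<le> (\<Sum>g\<in>G. (norm g)\<^sup>2 * (4*R\<^sup>2))"
        unfolding S_def
      proof (rule sum_mono)
        fix g assume "g \<in> G"
        have "norm (x - y) \<le> norm x + norm y" by (rule norm_triangle_ineq4)
        also have "\<dots> \<le> 2*R" using xB yB unfolding B_def by simp
        finally have nxy: "norm (x - y) \<le> 2*R" .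
        have "\<bar>blinfun_apply g (x - y)\<bar> \<le> norm g * norm (x - y)"
          using norm_blinfun[of g "x - y"] by simp
        also have "\<dots> \<le> norm g * (2*R)" using nxy by (intro mult_left_mono) auto
        finally have "\<bar>blinfun_apply g (x - y)\<bar>\<^sup>2 \<le> (norm g * (2*R))\<^sup>2"
          by (intro power_mono) auto
        then show "(blinfun_apply g (x - y))\<^sup>2 \<le> (norm g)\<^sup>2 * (4*R\<^sup>2)"
          by (simp add: power_mult_distrib)
      qed
      also have "\<dots> = 4*R\<^sup>2*L" unfolding L_def by (simp add: sum_distrib_right mult.commute)
      finally show ?thesis .
    qed
    have Qz: "Q z = Q y - 2*t*(blinfun_apply h x - blinfun_apply h y) + t\<^sup>2 * S"
    proof -
      have "Q z = (\<Sum>g\<in>G. (blinfun_apply g y - blinfun_apply \<phi> g)\<^sup>2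
          - 2*t*(a g * blinfun_apply g x - a g * blinfun_apply g y) + t\<^sup>2 * (blinfun_apply g (x - y))\<^sup>2)"
        unfolding Q_def z_def
        by (rule sum.cong) (auto simp: a_def blinfun.add_right blinfun.diff_right blinfun.scaleR_right
            power2_eq_square algebra_simps)
      also have "\<dots> = Q y - (\<Sum>g\<in>G. 2*t*(a g * blinfun_apply g x - a g * blinfun_apply g y)) + (\<Sum>g\<in>G. t\<^sup>2 * (blinfun_apply g (x - y))\<^sup>2)"
        unfolding Q_def by (simp only: sum.distrib sum_subtractf)
      also have "(\<Sum>g\<in>G. 2*t*(a g * blinfun_apply g x - a g * blinfun_apply g y)) = 2*t*(blinfun_apply h x - blinfun_apply h y)"
        unfolding hx by (simp only: sum_distrib_left[symmetric] sum_subtractf)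
      also have "(\<Sum>g\<in>G. t\<^sup>2 * (blinfun_apply g (x - y))\<^sup>2) = t\<^sup>2 * S"
        unfolding S_def by (simp only: sum_distrib_left[symmetric])
      finally show ?thesis .
    qed
    have "d \<le> Q z" using zB dle by blast
    then have "2*t*(blinfun_apply h x - blinfun_apply h y) < \<delta> + t\<^sup>2 * S"
      using Qz Qy by linarith
    also have "\<dots> \<le> \<delta> + t * (t * D)"
      using S t0 unfolding D_def by (simp add: power2_eq_square mult_left_mono)
    also have "\<dots> \<le> \<delta> + t * (\<eta>\<^sup>2/4)" using tD t0 by (intro add_left_mono mult_left_mono) auto
    also have "\<dots> = 2*t*(\<eta>\<^sup>2/4)" unfolding \<delta>_def by simp
    finally show ?thesis using t0 by simp
  qed
  define c where "c = blinfun_apply h y + \<eta>\<^sup>2/4"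
  have hle: "blinfun_apply h x \<le> c" if "x \<in> B" for x using cl1[OF that] unfolding c_def by simp
  have c0: "0 \<le> c" using hle[OF B0] by simp
  have nh: "R * norm h \<le> c"
  proof (cases "R = 0")
    case True then show ?thesis using c0 by simp
  next
    case False
    then have Rp: "R > 0" using R0 by simp
    have "norm h \<le> c / R"
    proof (rule norm_blinfun_bound)
      show "0 \<le> c / R" using c0 Rp by simp
      fix u :: 'a
      show "norm (blinfun_apply h u) \<le> c / R * norm u"
      proof (cases "u = 0")
        case True then show ?thesis by simp
      next
        case False
        define v where "v = (R / norm u) *\<^sub>R u"
        have nv: "norm v = R" unfolding v_def using False Rp by simp
        have "v \<in> B" "-v \<in> B" using nv unfolding B_def by auto
        then have "blinfun_apply h v \<le> c" "blinfun_apply h (-v) \<le> c" using hle by auto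
        then have "\<bar>blinfun_apply h v\<bar> \<le> c" by (simp add: blinfun.minus_right)
        moreover have "blinfun_apply h v = (R / norm u) * blinfun_apply h u"
          unfolding v_def by (simp add: blinfun.scaleR_right)
        ultimately have "(R / norm u) * \<bar>blinfun_apply h u\<bar> \<le> c"
          using Rp False by (simp add: abs_mult)
        then have "\<bar>blinfun_apply h u\<bar> \<le> c * norm u / R"
          using Rp False by (simp add: field_simps)
        then show ?thesis by simp
      qed
    qed
    then show ?thesis using Rp by (simp add: field_simps)
  qed
  have "blinfun_apply \<phi> h \<le> norm \<phi> * norm h"
    using norm_blinfun[of \<phi> h] by simp
  also have "\<dots> \<le> R * norm h" using nphi by (intro mult_right_mono) auto
  also have "\<dots> \<le> c" by (rule nh)
  finally have "blinfun_apply \<phi> h \<le> c" .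
  moreover have "0 < \<eta>\<^sup>2" using eta by simp
  ultimately show False using key Qy2 unfolding c_def by linarith
qed


lemma eval_cont: "continuous_map weak_star euclideanreal (\<lambda>\<phi>. blinfun_apply \<phi> f)"
  unfolding continuous_map_def ws_topspace using ws_basic_open by auto

lemma ws_compact_bounded:
  fixes C :: "(('a::banach \<Rightarrow>\<^sub>L real) \<Rightarrow>\<^sub>L real) set"
  assumes "compactin weak_star C"
  shows "\<exists>M. \<forall>\<phi>\<in>C. norm \<phi> \<le> M"
proof -
  have pw: "\<exists>m. \<forall>\<phi>\<in>C. \<bar>blinfun_apply \<phi> f\<bar> \<le> m" for f
  proof -
    have "compactin euclideanreal ((\<lambda>\<phi>. blinfun_apply \<phi> f) ` C)"
      using image_compactin[OF assms eval_cont] .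
    then have "bounded ((\<lambda>\<phi>. blinfun_apply \<phi> f) ` C)" by (simp add: compact_imp_bounded)
    then show ?thesis by (auto simp: bounded_real)
  qed
  define E where "E n = {f. \<forall>\<phi>\<in>C. \<bar>blinfun_apply \<phi> f\<bar> \<le> real n}" for n :: nat
  have cE: "closed (E n)" for n
  proof -
    have "E n = (\<Inter>\<phi>\<in>C. {f. \<bar>blinfun_apply \<phi> f\<bar> \<le> real n})" unfolding E_def by auto
    moreover have "closed {f. \<bar>blinfun_apply \<phi> f\<bar> \<le> real n}" for \<phi>
      by (intro closed_Collect_le continuous_intros)
    ultimately show ?thesis by auto
  qed
  have UE: "\<Union>(range E) = UNIV"
  proof -
    have "f \<in> \<Union>(range E)" for f
    proof -
      obtain m where m: "\<forall>\<phi>\<in>C. \<bar>blinfun_apply \<phi> f\<bar> \<le> m" using pw by blast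
      have "m \<le> real (nat \<lceil>m\<rceil>)" by linarith
      then have "f \<in> E (nat \<lceil>m\<rceil>)" unfolding E_def using m by (auto intro: order_trans)
      then show ?thesis by blast
    qed
    then show ?thesis by blast
  qed
  have "\<exists>n. interior (E n) \<noteq> {}"
  proof (rule ccontr)
    assume "\<not> ?thesis"
    then have "euclidean interior_of \<Union>(range E) = {}"
      by (intro Baire_category_alt) (auto simp: completely_metrizable_space_euclidean cE)
    then show False using UE by simp
  qed
  then obtain n f0 where "f0 \<in> interior (E n)" by blast
  then obtain r where r: "r > 0" "ball f0 r \<subseteq> E n" by (meson mem_interior)
  have "norm \<phi> \<le> 4 * real n / r" if phi: "\<phi> \<in> C" for \<phi>
  proof (rule norm_blinfun_bound)
    show "0 \<le> 4 * real n / r" using r by simp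
    fix g
    show "norm (blinfun_apply \<phi> g) \<le> 4 * real n / r * norm g"
    proof (cases "g = 0")
      case True then show ?thesis by simp
    next
      case False
      define g' where "g' = (r / (2 * norm g)) *\<^sub>R g"
      have ng: "norm g' = r/2" unfolding g'_def using False r by simp
      have "f0 + g' \<in> ball f0 r" using ng r by (simp add: dist_norm)
      then have 1: "\<bar>blinfun_apply \<phi> (f0 + g')\<bar> \<le> real n" using r phi unfolding E_def by blast
      have "f0 \<in> ball f0 r" using r by simp
      then have 2: "\<bar>blinfun_apply \<phi> f0\<bar> \<le> real n" using r phi unfolding E_def by blast
      have "blinfun_apply \<phi> g' = blinfun_apply \<phi> (f0 + g') - blinfun_apply \<phi> f0"
        by (simp add: blinfun.add_right)
      then have "\<bar>blinfun_apply \<phi> g'\<bar> \<le> 2 * real n" using 1 2 by linarith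
      moreover have "blinfun_apply \<phi> g' = (r / (2 * norm g)) * blinfun_apply \<phi> g"
        unfolding g'_def by (simp add: blinfun.scaleR_right)
      ultimately have "(r / (2 * norm g)) * \<bar>blinfun_apply \<phi> g\<bar> \<le> 2 * real n"
        using r False by (simp add: abs_mult)
      then have "\<bar>blinfun_apply \<phi> g\<bar> \<le> 4 * real n / r * norm g"
        using r False by (simp add: field_simps)
      then show ?thesis by simp
    qed
  qed
  then show ?thesis by blast
qed


theorem mainTheorem2:
  fixes C :: "(('a::banach \<Rightarrow>\<^sub>L real) \<Rightarrow>\<^sub>L real) set"
  assumes "convex C"
    and "compactin weak_star C"
  shows "\<exists>(\<Gamma> :: 'a set set) r Cs.
           filtering_family \<Gamma> r Cs \<and>
           (\<forall>\<alpha>\<in>\<Gamma>. convex (Cs \<alpha>) \<and> bounded (Cs \<alpha>) \<and> closed (Cs \<alpha>)) \<and>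
           C = (\<Inter>\<alpha>\<in>\<Gamma>. weak_star closure_of (canon_embed ` Cs \<alpha>))"
proof -
  obtain M where M: "\<And>\<phi>. \<phi> \<in> C \<Longrightarrow> norm \<phi> \<le> M"
    using ws_compact_bounded[OF assms(2)] by blast
  define D where "D F e = {x::'a. norm x \<le> M \<and> (\<exists>\<phi>\<in>C. \<forall>f\<in>F. \<bar>blinfun_apply f x - blinfun_apply \<phi> f\<bar> \<le> e)}"
    for F :: "('a \<Rightarrow>\<^sub>L real) set" and e :: real
  define \<Gamma> where "\<Gamma> = {closure (D F e) | F e. finite F \<and> e > 0}"
  define r where "r = {(A, B). A \<in> \<Gamma> \<and> B \<in> \<Gamma> \<and> B \<subseteq> A}"
  have Dmono: "D F' e' \<subseteq> D F e" if "F \<subseteq> F'" "e' \<le> e" for F F' e e'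
  proof
    fix x assume "x \<in> D F' e'"
    then obtain \<phi> where "norm x \<le> M" "\<phi> \<in> C" "\<forall>f\<in>F'. \<bar>blinfun_apply f x - blinfun_apply \<phi> f\<bar> \<le> e'"
      unfolding D_def by blast
    then have "\<forall>f\<in>F. \<bar>blinfun_apply f x - blinfun_apply \<phi> f\<bar> \<le> e" using that by force
    then show "x \<in> D F e" unfolding D_def using \<open>norm x \<le> M\<close> \<open>\<phi> \<in> C\<close> by blast
  qed
  have filt: "filtering_family \<Gamma> r (\<lambda>A. A)"
  proof -
    have po: "partial_order_on \<Gamma> r"
      unfolding partial_order_on_def preorder_on_def
    proof (intro conjI)
      show "r \<subseteq> \<Gamma> \<times> \<Gamma>" unfolding r_def by blast
      show "refl_on \<Gamma> r" unfolding refl_on_def r_def by blast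
      show "trans r" unfolding trans_def r_def by blast
      show "antisym r" unfolding antisym_def r_def by blast
    qed
    have dir: "\<exists>k\<in>\<Gamma>. (i, k) \<in> r \<and> (j, k) \<in> r" if ij: "i \<in> \<Gamma>" "j \<in> \<Gamma>" for i j
    proof -
      obtain F1 e1 where 1: "i = closure (D F1 e1)" "finite F1" "e1 > 0" using ij(1) unfolding \<Gamma>_def by blast
      obtain F2 e2 where 2: "j = closure (D F2 e2)" "finite F2" "e2 > 0" using ij(2) unfolding \<Gamma>_def by blast
      define k where "k = closure (D (F1 \<union> F2) (min e1 e2))"
      have k: "k \<in> \<Gamma>" unfolding k_def \<Gamma>_def using 1 2 by (intro CollectI exI[of _ "F1 \<union> F2"] exI[of _ "min e1 e2"]) auto
      have "k \<subseteq> i" unfolding k_def 1 by (intro closure_mono Dmono) auto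
      moreover have "k \<subseteq> j" unfolding k_def 2 by (intro closure_mono Dmono) auto
      ultimately show ?thesis using k ij unfolding r_def by blast
    qed
    have fam: "\<forall>\<alpha>\<in>\<Gamma>. \<forall>\<beta>\<in>\<Gamma>. (\<alpha>, \<beta>) \<in> r \<longrightarrow> \<beta> \<subseteq> \<alpha>"
      unfolding r_def by blast
    show ?thesis unfolding filtering_family_def filtering_poset_def using po dir fam by blast
  qed
  have Dconv: "convex (D F e)" for F e
  proof (rule convexI)
    fix x y :: 'a and u v :: real
    assume x: "x \<in> D F e" and y: "y \<in> D F e" and uv: "0 \<le> u" "0 \<le> v" "u + v = 1"
    obtain \<phi> where \<phi>: "\<phi> \<in> C" "\<forall>f\<in>F. \<bar>blinfun_apply f x - blinfun_apply \<phi> f\<bar> \<le> e" "norm x \<le> M"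
      using x unfolding D_def by blast
    obtain \<psi> where \<psi>: "\<psi> \<in> C" "\<forall>f\<in>F. \<bar>blinfun_apply f y - blinfun_apply \<psi> f\<bar> \<le> e" "norm y \<le> M"
      using y unfolding D_def by blast
    have "norm (u *\<^sub>R x + v *\<^sub>R y) \<le> norm (u *\<^sub>R x) + norm (v *\<^sub>R y)" by (rule norm_triangle_ineq)
    also have "\<dots> = u * norm x + v * norm y" using uv by simp
    also have "\<dots> \<le> u * M + v * M" using uv \<phi> \<psi> by (intro add_mono mult_left_mono) auto
    also have "\<dots> = (u + v) * M" by (simp add: distrib_right)
    also have "\<dots> = M" using uv by simp
    finally have n: "norm (u *\<^sub>R x + v *\<^sub>R y) \<le> M" .
    have c: "u *\<^sub>R \<phi> + v *\<^sub>R \<psi> \<in> C" using assms(1) \<phi>(1) \<psi>(1) uv by (rule convexD)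
    have "\<bar>blinfun_apply f (u *\<^sub>R x + v *\<^sub>R y) - blinfun_apply (u *\<^sub>R \<phi> + v *\<^sub>R \<psi>) f\<bar> \<le> e" if f: "f \<in> F" for f
    proof -
      have "blinfun_apply f (u *\<^sub>R x + v *\<^sub>R y) - blinfun_apply (u *\<^sub>R \<phi> + v *\<^sub>R \<psi>) f
          = u * (blinfun_apply f x - blinfun_apply \<phi> f) + v * (blinfun_apply f y - blinfun_apply \<psi> f)"
        by (simp add: blinfun.add_right blinfun.scaleR_right blinfun.add_left blinfun.scaleR_left algebra_simps)
      also have "\<bar>\<dots>\<bar> \<le> u * \<bar>blinfun_apply f x - blinfun_apply \<phi> f\<bar> + v * \<bar>blinfun_apply f y - blinfun_apply \<psi> f\<bar>"
        using uv by (simp add: abs_triangle_ineq[THEN order_trans] abs_mult)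
      also have "\<dots> \<le> u * e + v * e" using uv \<phi> \<psi> f by (intro add_mono mult_left_mono) auto
      also have "\<dots> = (u + v) * e" by (simp add: distrib_right)
      also have "\<dots> = e" using uv by simp
      finally show ?thesis .
    qed
    then show "u *\<^sub>R x + v *\<^sub>R y \<in> D F e" unfolding D_def using n c by blast
  qed
  have props: "convex A \<and> bounded A \<and> closed A" if AG: "A \<in> \<Gamma>" for A
  proof -
    obtain F e where A: "A = closure (D F e)" using AG unfolding \<Gamma>_def by blast
    have "D F e \<subseteq> cball 0 M" unfolding D_def by auto
    then have "A \<subseteq> cball 0 M" unfolding A by (intro closure_minimal) auto
    then show ?thesis unfolding A using Dconv by (auto intro: convex_closure bounded_subset)
  qed
  have sub: "C \<subseteq> weak_star closure_of (canon_embed ` A)" if AG: "A \<in> \<Gamma>" for A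
  proof
    fix \<phi> assume \<phi>: "\<phi> \<in> C"
    obtain F e where A: "A = closure (D F e)" "finite F" "e > 0" using AG unfolding \<Gamma>_def by blast
    show "\<phi> \<in> weak_star closure_of (canon_embed ` A)"
      unfolding in_closure_of ws_topspace
    proof (intro conjI allI impI UNIV_I)
      fix T assume T: "\<phi> \<in> T \<and> openin weak_star T"
      then obtain G \<delta> where G: "finite G" "\<delta> > 0"
        "{\<psi>. \<forall>g\<in>G. \<bar>blinfun_apply \<psi> g - blinfun_apply \<phi> g\<bar> < \<delta>} \<subseteq> T"
        using ws_nbhd by blast
      obtain x where x: "norm x \<le> M" "\<forall>g\<in>F \<union> G. \<bar>blinfun_apply g x - blinfun_apply \<phi> g\<bar> < min e \<delta>"
        using helly[of \<phi> M "F \<union> G" "min e \<delta>"] M[OF \<phi>] A G by auto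
      have "x \<in> D F e" unfolding D_def using x \<phi> by (auto intro!: less_imp_le)
      then have "canon_embed x \<in> canon_embed ` A" unfolding A using closure_subset by blast
      moreover have "canon_embed x \<in> T" using x G(3) by (auto simp: canon_apply)
      ultimately show "\<exists>y. y \<in> canon_embed ` A \<and> y \<in> T" by blast
    qed
  qed
  have sup: "\<psi> \<in> C" if \<psi>: "\<forall>A\<in>\<Gamma>. \<psi> \<in> weak_star closure_of (canon_embed ` A)" for \<psi>
  proof (rule ccontr)
    assume npsi: "\<psi> \<notin> C"
    define W where "W p = {\<xi>. blinfun_apply \<xi> (fst p) \<in> {y. snd p < \<bar>y - blinfun_apply \<psi> (fst p)\<bar>}}"
      for p :: "('a \<Rightarrow>\<^sub>L real) \<times> real"
    define P0 where "P0 = {p :: ('a \<Rightarrow>\<^sub>L real) \<times> real. snd p > 0}"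
    have Wopen: "openin weak_star (W p)" for p
      unfolding W_def by (intro ws_basic_open open_Collect_less continuous_intros)
    have cover: "C \<subseteq> \<Union>(W ` P0)"
    proof
      fix \<phi> assume \<phi>: "\<phi> \<in> C"
      then have "\<phi> \<noteq> \<psi>" using npsi by blast
      then obtain f where f: "blinfun_apply \<phi> f \<noteq> blinfun_apply \<psi> f" using blinfun_eqI by blast
      define p where "p = (f, \<bar>blinfun_apply \<phi> f - blinfun_apply \<psi> f\<bar> / 2)"
      have "p \<in> P0" unfolding P0_def p_def using f by simp
      moreover have "\<phi> \<in> W p" unfolding W_def p_def using f by simp
      ultimately show "\<phi> \<in> \<Union>(W ` P0)" by blast
    qed
    have "\<forall>U\<in>W ` P0. openin weak_star U" using Wopen by blast
    then obtain \<F> where \<F>: "finite \<F>" "\<F> \<subseteq> W ` P0" "C \<subseteq> \<Union>\<F>"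
      using assms(2) cover unfolding compactin_def by blast
    obtain P where P: "P \<subseteq> P0" "finite P" "\<F> = W ` P"
      using finite_subset_image[OF \<F>(1,2)] by blast
    define F where "F = fst ` P"
    define e0 where "e0 = Min (insert 1 (snd ` P))"
    have e0: "e0 > 0" unfolding e0_def using P P0_def by auto
    have e0le: "e0 \<le> snd p" if "p \<in> P" for p unfolding e0_def using P that by auto
    define e where "e = e0 / 4"
    have e: "e > 0" unfolding e_def using e0 by simp
    have finF: "finite F" unfolding F_def using P by simp
    have "closure (D F e) \<in> \<Gamma>" unfolding \<Gamma>_def using finF e by blast
    then have pc: "\<psi> \<in> weak_star closure_of (canon_embed ` closure (D F e))" using \<psi> by blast
    have op: "openin weak_star {\<xi>. \<forall>g\<in>F. \<bar>blinfun_apply \<xi> g - blinfun_apply \<psi> g\<bar> < e}"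
      by (rule ws_open_finite[OF finF])
    have mem: "\<psi> \<in> {\<xi>. \<forall>g\<in>F. \<bar>blinfun_apply \<xi> g - blinfun_apply \<psi> g\<bar> < e}" using e by simp
    obtain y where "y \<in> canon_embed ` closure (D F e)"
        "y \<in> {\<xi>. \<forall>g\<in>F. \<bar>blinfun_apply \<xi> g - blinfun_apply \<psi> g\<bar> < e}"
      using pc[unfolded in_closure_of, THEN conjunct2, rule_format, OF conjI[OF mem op]] by blast
    then obtain x where x: "x \<in> closure (D F e)" "\<forall>g\<in>F. \<bar>blinfun_apply g x - blinfun_apply \<psi> g\<bar> < e"
      by (auto simp: canon_apply)
    define K where "K = 1 + (\<Sum>g\<in>F. norm g)"
    have K: "K > 0" unfolding K_def by (simp add: add_pos_nonneg sum_nonneg)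
    have Kg: "norm g \<le> K" if "g \<in> F" for g
    proof -
      have "norm g \<le> (\<Sum>g\<in>F. norm g)" using finF that by (intro member_le_sum) auto
      then show ?thesis unfolding K_def by simp
    qed
    have eK: "e / K > 0" using e K by simp
    then obtain x' where x': "x' \<in> D F e" "dist x' x < e / K"
      using x(1) unfolding closure_approachable by blast
    obtain \<phi> where \<phi>: "\<phi> \<in> C" "\<forall>f\<in>F. \<bar>blinfun_apply f x' - blinfun_apply \<phi> f\<bar> \<le> e"
      using x'(1) unfolding D_def by blast
    have close: "\<bar>blinfun_apply \<phi> g - blinfun_apply \<psi> g\<bar> < 3 * e" if g: "g \<in> F" for g
    proof -
      have "\<bar>blinfun_apply g x' - blinfun_apply g x\<bar> = \<bar>blinfun_apply g (x' - x)\<bar>"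
        by (simp add: blinfun.diff_right)
      also have "\<dots> \<le> norm g * norm (x' - x)" using norm_blinfun[of g "x' - x"] by simp
      also have "\<dots> \<le> K * (e / K)"
        using Kg[OF g] x'(2) K by (intro mult_mono) (auto simp: dist_norm)
      also have "\<dots> = e" using K by simp
      finally have c: "\<bar>blinfun_apply g x' - blinfun_apply g x\<bar> \<le> e" .
      have a: "\<bar>blinfun_apply g x' - blinfun_apply \<phi> g\<bar> \<le> e" using \<phi>(2) g by blast
      have b: "\<bar>blinfun_apply g x - blinfun_apply \<psi> g\<bar> < e" using x(2) g by blast
      show ?thesis using a b c unfolding abs_le_iff abs_less_iff by linarith
    qed
    obtain p where p: "p \<in> P" "\<phi> \<in> W p" using \<phi>(1) \<F>(3) P(3) by blast
    have "fst p \<in> F" unfolding F_def using p by simp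
    then have "\<bar>blinfun_apply \<phi> (fst p) - blinfun_apply \<psi> (fst p)\<bar> < 3 * e" by (rule close)
    moreover have "snd p < \<bar>blinfun_apply \<phi> (fst p) - blinfun_apply \<psi> (fst p)\<bar>"
      using p(2) unfolding W_def by simp
    moreover have "e0 \<le> snd p" using e0le p(1) .
    ultimately show False unfolding e_def using e0 by linarith
  qed
  have "C = (\<Inter>A\<in>\<Gamma>. weak_star closure_of (canon_embed ` A))"
    using sub sup by blast
  then show ?thesis using filt props
    by (intro exI[of _ \<Gamma>] exI[of _ r] exI[of _ "\<lambda>A. A"] conjI) blast+
qed

end
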